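(* Let $m,n,d,n_0$ be positive integers, $R>0$, $\mathbb{S}^d:=[-R,R]^d$, $x\in\mathbb{R}^{m\times n}$, and let $G:\mathbb{R}^d\to\mathbb{R}^{m\times n}$ be continuous. Assume there exists $z^*\in\mathbb{S}^d$ with $\|x-G(z^* )\|_0\le n_0$. Consider the constrained problem $$(\mathrm{P}_0):\quad \min_{z\in\mathbb{S}^d,\ M\in\mathbb{R}^{m\times n}} \|(\mathbf{1}-M)\odot x-(\mathbf{1}-M)\odot G(z)\|_2^2 \quad\text{s.t. } \|M\|_0\le n_0,$$ and, for $\lambda>0$, the penalized problem $$(\mathrm{P}_\lambda):\quad \min_{z\in\mathbb{S}^d,\ M\in\mathbb{R}^{m\times n}} \|(\mathbf{1}-M)\odot x-(\mathbf{1}-M)\odot G(z)\|_2^2+\lambda\|M\|_1 .$$ Let $\hat z(\lambda)$ be any optimal $z$-component of a solution of $(\mathrm{P}_\lambda)$, and let $\mathcal{Z}^*$ be the set of $z$-components of optimal solutions of $(\mathrm{P}_0)$. Then $d_\infty(\hat z(\lambda),\mathcal{Z}^* )\downarrow 0$ as $\lambda\downarrow 0$. Moreover, letting $\tilde n=\min_{z\in\mathbb{S}^d}\|x-G(z)\|_0$ and $\tilde{\mathcal{Z}}=\{z\in\mathbb{S}^d : \|x-G(z)\|_0=\tilde n\}$, we have $d_\infty(\hat z(\lambda),\tilde{\mathcal{Z}})\downarrow 0$ as $\lambda\downarrow 0$. If in addition $\tilde{\mathcal{Z}}=\{z^*\}$ (i.e. $z^*$ is the unique minimizer of $\|x-G(z)\|_0$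 over $\mathbb{S}^d$), then $\hat z(\lambda)\to z^*$ as $\lambda\downarrow 0$.
   Context: For a matrix $T$, $\|T\|_0$ is the number of nonzero entries, and $\|T\|_1,\|T\|_2,\|T\|_\infty$ are computed by treating $T$ as a vector. $\mathbf{1}$ is the all-ones $m\times n$ matrix and $\odot$ is the entrywise (Hadamard) product. For a point $a$ and a set $B$, $d_\infty(a,B):=\inf_{b\in B}\|a-b\|_\infty$. *)

theory Defs
  imports "HOL-Analysis.Analysis"
begin

text \<open>Matrices in R^(m x n) are represented as real^'n^'m (entry T$i$j).
  Vectors in R^d are real^'d.\<close>

definition mat_l0 :: "real^'n^'m \<Rightarrow> nat" where
  "mat_l0 T = card {(i,j). T$i$j \<noteq> 0}"

definition mat_l1 :: "real^'n^'m \<Rightarrow> real" where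
  "mat_l1 T = (\<Sum>i\<in>UNIV. \<Sum>j\<in>UNIV. \<bar>T$i$j\<bar>)"

definition mat_l2sq :: "real^'n^'m \<Rightarrow> real" where
  "mat_l2sq T = (\<Sum>i\<in>UNIV. \<Sum>j\<in>UNIV. (T$i$j)^2)"

definition hadamard :: "real^'n^'m \<Rightarrow> real^'n^'m \<Rightarrow> real^'n^'m" where
  "hadamard A B = (\<chi> i j. A$i$j * B$i$j)"

definition ones_mat :: "real^'n^'m" where
  "ones_mat = (\<chi> i j. 1)"

definition vec_linf :: "real^'d \<Rightarrow> real" where
  "vec_linf a = Max (range (\<lambda>i. \<bar>a$i\<bar>))"

definition d_inf :: "real^'d \<Rightarrow> (real^'d) set \<Rightarrow> real" where
  "d_inf a B = Inf ((\<lambda>b. vec_linf (a - b)) ` B)"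

definition box_set :: "real \<Rightarrow> (real^'d) set" where
  "box_set R = {z. \<forall>i. \<bar>z$i\<bar> \<le> R}"

definition fit :: "real^'n^'m \<Rightarrow> ((real^'d) \<Rightarrow> real^'n^'m) \<Rightarrow> real^'d \<Rightarrow> real^'n^'m \<Rightarrow> real" where
  "fit x G z M = mat_l2sq (hadamard (ones_mat - M) x - hadamard (ones_mat - M) (G z))"

definition opt_P0 :: "real \<Rightarrow> nat \<Rightarrow> real^'n^'m \<Rightarrow> ((real^'d) \<Rightarrow> real^'n^'m) \<Rightarrow> real^'d \<Rightarrow> real^'n^'m \<Rightarrow> bool" where
  "opt_P0 R n0 x G z M \<longleftrightarrow> z \<in> box_set R \<and> mat_l0 M \<le> n0 \<and>
     (\<forall>z'\<in>box_set R. \<forall>M'. mat_l0 M' \<le> n0 \<longrightarrow> fit x G z M \<le> fit x G z' M')"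

definition opt_Plam :: "real \<Rightarrow> real \<Rightarrow> real^'n^'m \<Rightarrow> ((real^'d) \<Rightarrow> real^'n^'m) \<Rightarrow> real^'d \<Rightarrow> real^'n^'m \<Rightarrow> bool" where
  "opt_Plam R lam x G z M \<longleftrightarrow> z \<in> box_set R \<and>
     (\<forall>z'\<in>box_set R. \<forall>M'. fit x G z M + lam * mat_l1 M \<le> fit x G z' M' + lam * mat_l1 M')"

end

theory Submission
  imports Defs "HOL-Library.Infinite_Set"
begin

lemma term_lb:
  fixes m r lam c :: real
  assumes "c > 0" "r^2 \<ge> c" "lam > 0"
  shows "(1-m)^2*r^2 + lam*\<bar>m\<bar> \<ge> lam - lam^2/(4*c)"
proof (cases "m \<le> 1")
  case True
  have a: "(1-m)^2*r^2 \<ge> (1-m)^2*c" using assms by (simp add: mult_left_mono)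
  have b: "lam*\<bar>m\<bar> \<ge> lam*m" using assms by (simp add: mult_left_mono)
  have e: "(1-m)^2*c + lam*m - (lam - lam^2/(4*c)) = (2*c*(1-m) - lam)^2/(4*c)"
    using assms by (simp add: field_simps power2_eq_square)
  have "(2*c*(1-m) - lam)^2/(4*c) \<ge> 0" using assms by simp
  hence "(1-m)^2*c + lam*m \<ge> lam - lam^2/(4*c)" using e by linarith
  then show ?thesis using a b by linarith
next
  case False
  have "lam*\<bar>m\<bar> \<ge> lam" using False assms by simp
  moreover have "(1-m)^2*r^2 \<ge> 0" by simp
  moreover have "lam^2/(4*c) \<ge> 0" using assms by simp
  ultimately show ?thesis by linarith
qed

lemma term_nonneg:
  fixes m r lam :: real
  assumes "lam > 0"
  shows "(1-m)^2*r^2 + lam*\<bar>m\<bar> \<ge> 0"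
  using assms by simp

lemma obj_sum:
  "fit x G z M + lam * mat_l1 M =
    (\<Sum>p\<in>UNIV. (1 - M$fst p$snd p)^2 * (x$fst p$snd p - G z$fst p$snd p)^2 + lam*\<bar>M$fst p$snd p\<bar>)"
proof -
  have "fit x G z M + lam * mat_l1 M =
    (\<Sum>i\<in>UNIV. \<Sum>j\<in>UNIV. (1 - M$i$j)^2 * (x$i$j - G z$i$j)^2 + lam*\<bar>M$i$j\<bar>)"
    unfolding fit_def mat_l1_def mat_l2sq_def hadamard_def ones_mat_def
    by (simp add: sum_distrib_left sum.distrib power_mult_distrib[symmetric] right_diff_distrib)
  also have "\<dots> = (\<Sum>p\<in>UNIV \<times> UNIV. (1 - M$fst p$snd p)^2 * (x$fst p$snd p - G z$fst p$snd p)^2 + lam*\<bar>M$fst p$snd p\<bar>)"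
    by (simp add: sum.cartesian_product case_prod_beta)
  finally show ?thesis by simp
qed

lemma fin_pairs: "finite (S :: ('a::finite \<times> 'b::finite) set)"
  by simp

lemma upper:
  fixes x :: "real^'n^'m" and G :: "real^'d \<Rightarrow> real^'n^'m"
  shows "\<exists>M. fit x G z M = 0 \<and> mat_l1 M = real (mat_l0 (x - G z)) \<and> mat_l0 M = mat_l0 (x - G z)"
proof -
  define M :: "real^'n^'m" where "M = (\<chi> i j. if x$i$j - G z$i$j \<noteq> 0 then 1 else 0)"
  have "fit x G z M = 0"
    unfolding fit_def mat_l2sq_def hadamard_def ones_mat_def M_def
    by (auto simp: right_diff_distrib[symmetric] intro!: sum.neutral)
  moreover have "mat_l1 M = real (mat_l0 (x - G z))"
  proof -
    have "mat_l1 M = (\<Sum>i\<in>UNIV. \<Sum>j\<in>UNIV. if (i,j) \<in> {(i,j). x$i$j - G z$i$j \<noteq> 0} then 1 else (0::real))"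
      unfolding mat_l1_def M_def by (simp add: if_distrib)
    also have "\<dots> = (\<Sum>p\<in>UNIV \<times> UNIV. if p \<in> {(i,j). x$i$j - G z$i$j \<noteq> 0} then 1 else (0::real))"
      by (simp add: sum.cartesian_product case_prod_beta)
    also have "\<dots> = real (card {(i,j). x$i$j - G z$i$j \<noteq> 0})"
      by (simp add: sum.If_cases)
    finally show ?thesis unfolding mat_l0_def by simp
  qed
  moreover have "mat_l0 M = mat_l0 (x - G z)"
  proof -
    have "{(i,j). M$i$j \<noteq> 0} = {(i,j). (x - G z)$i$j \<noteq> 0}" by (auto simp: M_def)
    then show ?thesis unfolding mat_l0_def by simp
  qed
  ultimately show ?thesis by blast
qed

lemma key:
  fixes x :: "real^'n^'m" and G :: "real^'d \<Rightarrow> real^'n^'m"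
    and w :: "nat \<Rightarrow> real^'d" and M :: "nat \<Rightarrow> real^'n^'m" and l :: "nat \<Rightarrow> real"
  assumes cont: "continuous_on UNIV G"
    and opt: "\<And>k. fit x G (w k) (M k) + l k * mat_l1 (M k) \<le> l k * real n"
    and lpos: "\<And>k. l k > 0" and l0: "l \<longlonglongrightarrow> 0" and wl: "w \<longlonglongrightarrow> z0"
  shows "mat_l0 (x - G z0) \<le> n"
proof (rule ccontr)
  assume "\<not> mat_l0 (x - G z0) \<le> n"
  define r0 where "r0 = (\<lambda>p::'m\<times>'n. x$fst p$snd p - G z0$fst p$snd p)"
  define N where "N = {p. r0 p \<noteq> 0}"
  have cN: "card N \<ge> n + 1"
  proof -
    have "N = {(i,j). (x - G z0)$i$j \<noteq> 0}" unfolding N_def r0_def by auto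
    then show ?thesis using \<open>\<not> mat_l0 (x - G z0) \<le> n\<close> unfolding mat_l0_def by simp
  qed
  have Nne: "N \<noteq> {}" using cN by auto
  have finN: "finite N" by simp
  define c where "c = Min ((\<lambda>p. r0 p ^ 2 / 2) ` N)"
  have cpos: "c > 0" unfolding c_def using Nne finN by (auto simp: N_def)
  have cle: "c < r0 p ^ 2" if "p \<in> N" for p
  proof -
    have "c \<le> r0 p ^ 2 / 2" unfolding c_def by (rule Min_le) (use that finN in auto)
    moreover have "r0 p ^ 2 > 0" using that by (auto simp: N_def)
    ultimately show ?thesis by linarith
  qed
  have Gl: "(\<lambda>k. G (w k)) \<longlonglongrightarrow> G z0"
  proof -
    have "isCont G z0" using cont by (simp add: continuous_on_eq_continuous_at)
    then show ?thesis using wl by (rule isCont_tendsto_compose)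
  qed
  have ev1: "\<forall>\<^sub>F k in sequentially. \<forall>p\<in>N. (x$fst p$snd p - G (w k)$fst p$snd p)^2 > c"
  proof (rule eventually_ball_finite[OF finN], rule ballI)
    fix p assume pN: "p \<in> N"
    have "(\<lambda>k. (x$fst p$snd p - G (w k)$fst p$snd p)^2) \<longlonglongrightarrow> r0 p ^ 2"
      unfolding r0_def by (intro tendsto_power tendsto_diff tendsto_const tendsto_vec_nth[OF tendsto_vec_nth[OF Gl]])
    then show "\<forall>\<^sub>F k in sequentially. (x$fst p$snd p - G (w k)$fst p$snd p)^2 > c"
      using cle[OF pN] by (rule order_tendstoD)
  qed
  have ev2: "\<forall>\<^sub>F k in sequentially. l k < 4*c/(real n + 1)"
    using l0 by (rule order_tendstoD) (use cpos in simp)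
  obtain k where k1: "\<forall>p\<in>N. (x$fst p$snd p - G (w k)$fst p$snd p)^2 > c"
    and k2: "l k < 4*c/(real n + 1)"
  proof -
    from eventually_conj[OF ev1 ev2] obtain K where "\<forall>k\<ge>K. (\<forall>p\<in>N. (x$fst p$snd p - G (w k)$fst p$snd p)^2 > c) \<and> l k < 4*c/(real n + 1)"
      unfolding eventually_sequentially by blast
    then show ?thesis using that by blast
  qed
  define t where "t = (\<lambda>p::'m\<times>'n. (1 - M k$fst p$snd p)^2 * (x$fst p$snd p - G (w k)$fst p$snd p)^2 + l k*\<bar>M k$fst p$snd p\<bar>)"
  have "(\<Sum>p\<in>N. l k - (l k)^2/(4*c)) \<le> (\<Sum>p\<in>N. t p)"
    unfolding t_def using k1 lpos cpos by (intro sum_mono term_lb) auto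
  also have "\<dots> \<le> (\<Sum>p\<in>UNIV. t p)"
    unfolding t_def using term_nonneg[OF lpos[of k]] by (intro sum_mono2) auto
  also have "\<dots> \<le> l k * real n" using opt[of k] unfolding obj_sum t_def .
  finally have A: "real (card N) * (l k - (l k)^2/(4*c)) \<le> l k * real n" by simp
  have lk: "l k * (real n + 1) < 4*c" using k2 cpos by (simp add: field_simps)
  have pos: "l k - (l k)^2/(4*c) > 0"
  proof -
    have "l k * l k \<le> l k * (real n + 1) * l k" using lpos[of k] by (simp add: algebra_simps)
    also have "\<dots> < 4*c * l k" using lk lpos[of k] by (simp add: mult_strict_right_mono)
    finally have "(l k)^2 < l k * (4*c)" by (simp add: power2_eq_square algebra_simps)
    then have "(l k)^2/(4*c) < l k" using cpos by (simp add: divide_less_eq)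
    then show ?thesis by simp
  qed
  have "(real n + 1) * (l k - (l k)^2/(4*c)) \<le> real (card N) * (l k - (l k)^2/(4*c))"
    using cN pos by (intro mult_right_mono) auto
  with A have "(real n + 1) * (l k - (l k)^2/(4*c)) \<le> l k * real n" by linarith
  hence "l k \<le> (real n + 1) * (l k)^2/(4*c)" by (simp add: field_simps)
  hence "l k * (4*c) \<le> (real n + 1) * (l k)^2" using cpos by (simp add: field_simps)
  hence "4*c \<le> (real n + 1) * l k" using lpos[of k] by (simp add: power2_eq_square)
  with lk show False by (simp add: algebra_simps)
qed

lemma comp_le_linf: "\<bar>v$i\<bar> \<le> vec_linf v"
  unfolding vec_linf_def by (rule Max_ge) auto

lemma linf_nonneg: "vec_linf v \<ge> 0"
  using comp_le_linf[of v] by (meson abs_ge_zero order_trans)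

lemma linf_le_norm: "vec_linf v \<le> norm v"
  unfolding vec_linf_def by (rule Max.boundedI) (auto simp: component_le_norm_cart)

lemma norm_le_linf: "norm (v::real^'d) \<le> real CARD('d) * vec_linf v"
proof -
  have "norm v \<le> (\<Sum>i\<in>UNIV. \<bar>v$i\<bar>)" by (rule norm_le_l1_cart)
  also have "\<dots> \<le> (\<Sum>i\<in>(UNIV::'d set). vec_linf v)" by (intro sum_mono comp_le_linf)
  finally show ?thesis by simp
qed

lemma d_inf_nonneg: "B \<noteq> {} \<Longrightarrow> d_inf a B \<ge> 0"
  unfolding d_inf_def by (rule cInf_greatest) (auto simp: linf_nonneg)

lemma bdd_linf: "bdd_below ((\<lambda>b. vec_linf (a - b)) ` B)"
  by (rule bdd_belowI[of _ 0]) (auto simp: linf_nonneg)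

lemma d_inf_le: "b \<in> B \<Longrightarrow> d_inf a B \<le> vec_linf (a - b)"
  unfolding d_inf_def by (rule cInf_lower) (auto simp: bdd_linf)

lemma d_inf_mono: "A \<noteq> {} \<Longrightarrow> A \<subseteq> B \<Longrightarrow> d_inf a B \<le> d_inf a A"
  unfolding d_inf_def by (rule cInf_superset_mono) (auto simp: bdd_linf)

lemma d_inf_single: "d_inf a {b} = vec_linf (a - b)"
  unfolding d_inf_def by simp

lemma box_compact: "compact (box_set R :: (real^'d) set)"
proof -
  have "box_set R = cbox (\<chi> i. - R) (\<chi> i. R :: real^'d)"
    unfolding box_set_def by (auto simp: mem_box_cart abs_le_iff) (metis minus_le_iff)+
  then show ?thesis by simp
qed

lemma fit_nonneg: "fit x G z M \<ge> 0"
  unfolding fit_def mat_l2sq_def by (intro sum_nonneg) auto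

lemma l0_bound: "mat_l0 (T :: real^'n^'m) \<le> CARD('m \<times> 'n)"
  unfolding mat_l0_def by (rule card_mono) auto

theorem theorem1:
  fixes R :: real and n0 :: nat and x :: "real^'n^'m"
    and G :: "real^'d \<Rightarrow> real^'n^'m" and zstar :: "real^'d"
    and zhat :: "real \<Rightarrow> real^'d"
  assumes "R > 0" and "n0 > 0"
    and "continuous_on UNIV G"
    and "zstar \<in> box_set R" and "mat_l0 (x - G zstar) \<le> n0"
    and "\<And>lam. lam > 0 \<Longrightarrow> \<exists>M. opt_Plam R lam x G (zhat lam) M"
  shows "((\<lambda>lam. d_inf (zhat lam) {z. \<exists>M. opt_P0 R n0 x G z M}) \<longlongrightarrow> 0) (at_right 0)
     \<and> ((\<lambda>lam. d_inf (zhat lam)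
            {z \<in> box_set R. mat_l0 (x - G z) = Min ((\<lambda>z. mat_l0 (x - G z)) ` box_set R)})
          \<longlongrightarrow> 0) (at_right 0)
     \<and> ({z \<in> box_set R. mat_l0 (x - G z) = Min ((\<lambda>z. mat_l0 (x - G z)) ` box_set R)} = {zstar}
          \<longrightarrow> (zhat \<longlongrightarrow> zstar) (at_right 0))"
proof -
  define f where "f = (\<lambda>z. mat_l0 (x - G z))"
  define nt where "nt = Min (f ` box_set R)"
  define Zt where "Zt = {z \<in> box_set R. f z = nt}"
  define Zs where "Zs = {z. \<exists>M. opt_P0 R n0 x G z M}"
  define d where "d = (\<lambda>lam. d_inf (zhat lam) Zt)"
  have finim: "finite (f ` box_set R)"
    by (rule finite_subset[of _ "{..CARD('m \<times> 'n)}"]) (use l0_bound[where 'n='n and 'm='m] in \<open>auto simp: f_def\<close>)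
  have imne: "f ` box_set R \<noteq> {}" using assms(4) by auto
  have ntin: "nt \<in> f ` box_set R" unfolding nt_def using finim imne by (rule Min_in)
  have ntle: "nt \<le> f z" if "z \<in> box_set R" for z
    unfolding nt_def using finim that by (auto intro: Min_le)
  have Ztne: "Zt \<noteq> {}" using ntin unfolding Zt_def by auto
  have ZtZs: "Zt \<subseteq> Zs"
  proof
    fix z assume z: "z \<in> Zt"
    obtain M where M: "fit x G z M = 0" "mat_l0 M = mat_l0 (x - G z)" using upper by blast
    have "f z \<le> n0" using z ntle[OF assms(4)] assms(5) unfolding Zt_def f_def by auto
    then have "opt_P0 R n0 x G z M" unfolding opt_P0_def using z M fit_nonneg
      by (auto simp: Zt_def f_def)
    then show "z \<in> Zs" unfolding Zs_def by blast
  qed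
  have optb: "\<exists>M. zhat lam \<in> box_set R \<and> fit x G (zhat lam) M + lam * mat_l1 M \<le> lam * real nt"
    if lp: "lam > 0" for lam
  proof -
    obtain M where M: "opt_Plam R lam x G (zhat lam) M" using assms(6)[OF lp] by blast
    obtain zt where zt: "zt \<in> Zt" using Ztne by blast
    obtain M' where M': "fit x G zt M' = 0" "mat_l1 M' = real (mat_l0 (x - G zt))" using upper by blast
    have "fit x G (zhat lam) M + lam * mat_l1 M \<le> fit x G zt M' + lam * mat_l1 M'"
      using M zt unfolding opt_Plam_def Zt_def by blast
    also have "\<dots> = lam * real nt" using M' zt unfolding Zt_def f_def by simp
    finally show ?thesis using M unfolding opt_Plam_def by blast
  qed
  then have "\<forall>lam. \<exists>M. lam > 0 \<longrightarrow> zhat lam \<in> box_set R \<and> fit x G (zhat lam) M + lam * mat_l1 M \<le> lam * real nt"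
    by blast
  then obtain Mh where Mh0: "\<forall>lam. lam > 0 \<longrightarrow> zhat lam \<in> box_set R \<and> fit x G (zhat lam) (Mh lam) + lam * mat_l1 (Mh lam) \<le> lam * real nt"
    by (rule choice[THEN exE])
  have Mh: "zhat lam \<in> box_set R \<and> fit x G (zhat lam) (Mh lam) + lam * mat_l1 (Mh lam) \<le> lam * real nt" if "lam > 0" for lam
    using Mh0 that by blast
  have dnn: "d lam \<ge> 0" for lam unfolding d_def using Ztne by (rule d_inf_nonneg)
  have C2: "(d \<longlongrightarrow> 0) (at_right 0)"
  proof (rule tendsto_at_right_sequentially[of 0 1])
    show "(0::real) < 1" by simp
    fix S :: "nat \<Rightarrow> real" assume Spos: "\<And>n. 0 < S n" and S0: "S \<longlonglongrightarrow> 0"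
    show "(\<lambda>n. d (S n)) \<longlonglongrightarrow> 0"
    proof (rule ccontr)
      assume "\<not> (\<lambda>n. d (S n)) \<longlonglongrightarrow> 0"
      then obtain e where e: "e > 0" and fr: "\<forall>no. \<exists>n\<ge>no. \<not> \<bar>d (S n)\<bar> < e"
        unfolding LIMSEQ_iff by auto
      have "infinite {n. e \<le> d (S n)}"
        unfolding infinite_nat_iff_unbounded_le using fr dnn by (auto simp: not_less)
      then obtain r1 :: "nat \<Rightarrow> nat" where r1: "strict_mono r1" "\<And>n. e \<le> d (S (r1 n))"
        using infinite_enumerate by blast
      have inbox: "\<forall>n. zhat (S (r1 n)) \<in> box_set R" using Mh Spos by blast
      obtain z0 r2 where z0: "z0 \<in> box_set R" and r2: "strict_mono r2"
        and conv: "((\<lambda>n. zhat (S (r1 n))) \<circ> r2) \<longlonglongrightarrow> z0"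
        using seq_compactE[OF compact_imp_seq_compact[OF box_compact[of R]] inbox] by blast
      define l where "l = (\<lambda>k. S (r1 (r2 k)))"
      have l0: "l \<longlonglongrightarrow> 0"
      proof -
        have "strict_mono (r1 \<circ> r2)" using r1(1) r2 by (rule strict_mono_o)
        then have "(S \<circ> (r1 \<circ> r2)) \<longlonglongrightarrow> 0" by (rule LIMSEQ_subseq_LIMSEQ[OF S0])
        then show ?thesis unfolding l_def comp_def .
      qed
      have "mat_l0 (x - G z0) \<le> nt"
      proof (rule key[OF assms(3)])
        show "fit x G (zhat (l k)) (Mh (l k)) + l k * mat_l1 (Mh (l k)) \<le> l k * real nt" for k
          using Mh Spos unfolding l_def by blast
        show "l k > 0" for k using Spos unfolding l_def by blast
        show "l \<longlonglongrightarrow> 0" by (rule l0)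
        show "(\<lambda>k. zhat (l k)) \<longlonglongrightarrow> z0" using conv unfolding l_def comp_def .
      qed
      then have z0Zt: "z0 \<in> Zt" using ntle[OF z0] z0 unfolding Zt_def f_def by auto
      have "(\<lambda>k. norm (zhat (l k) - z0)) \<longlonglongrightarrow> 0"
      proof -
        have "(\<lambda>k. zhat (l k)) \<longlonglongrightarrow> z0" using conv unfolding l_def comp_def .
        then have "(\<lambda>k. zhat (l k) - z0) \<longlonglongrightarrow> 0" by (rule LIM_zero)
        then show ?thesis by (rule tendsto_norm_zero)
      qed
      then obtain K where K: "\<And>k. k \<ge> K \<Longrightarrow> norm (zhat (l k) - z0) < e"
        using e unfolding LIMSEQ_iff by auto
      have "d (l K) \<le> vec_linf (zhat (l K) - z0)" unfolding d_def by (rule d_inf_le[OF z0Zt])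
      also have "\<dots> \<le> norm (zhat (l K) - z0)" by (rule linf_le_norm)
      also have "\<dots> < e" using K by simp
      finally show False using r1(2)[of "r2 K"] unfolding l_def by simp
    qed
  qed
  have C1: "((\<lambda>lam. d_inf (zhat lam) Zs) \<longlongrightarrow> 0) (at_right 0)"
  proof (rule tendsto_sandwich[OF _ _ tendsto_const C2])
    show "\<forall>\<^sub>F lam in at_right 0. 0 \<le> d_inf (zhat lam) Zs"
      using Ztne ZtZs by (intro always_eventually allI d_inf_nonneg) auto
    show "\<forall>\<^sub>F lam in at_right 0. d_inf (zhat lam) Zs \<le> d lam"
      unfolding d_def using Ztne ZtZs by (intro always_eventually allI d_inf_mono) auto
  qed
  have C3: "(zhat \<longlongrightarrow> zstar) (at_right 0)" if single: "Zt = {zstar}"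
  proof -
    have "((\<lambda>lam. real CARD('d) * d lam) \<longlongrightarrow> real CARD('d) * 0) (at_right 0)"
      by (intro tendsto_mult tendsto_const C2)
    then have A: "((\<lambda>lam. real CARD('d) * d lam) \<longlongrightarrow> 0) (at_right 0)" by simp
    have "((\<lambda>lam. norm (zhat lam - zstar)) \<longlongrightarrow> 0) (at_right 0)"
    proof (rule tendsto_sandwich[OF _ _ tendsto_const A])
      show "\<forall>\<^sub>F lam in at_right 0. 0 \<le> norm (zhat lam - zstar)" by simp
      show "\<forall>\<^sub>F lam in at_right 0. norm (zhat lam - zstar) \<le> real CARD('d) * d lam"
        unfolding d_def single d_inf_single by (intro always_eventually allI norm_le_linf)
    qed
    then have "((\<lambda>lam. zhat lam - zstar) \<longlongrightarrow> 0) (at_right 0)"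
      by (simp add: tendsto_norm_zero_iff)
    then show ?thesis by (simp add: LIM_zero_iff)
  qed
  have "(d \<longlongrightarrow> 0) (at_right 0) \<and> ((\<lambda>lam. d_inf (zhat lam) Zs) \<longlongrightarrow> 0) (at_right 0) \<and> (Zt = {zstar} \<longrightarrow> (zhat \<longlongrightarrow> zstar) (at_right 0))"
    using C1 C2 C3 by blast
  then show ?thesis unfolding Zs_def d_def Zt_def f_def nt_def by (intro conjI) auto
qed

end
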